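(* Let $v_1\ge v_2\ge\cdots\ge v_n\ge 0$ be reals with $v_1>0$, and let $k=\max\{i:v_i>v_1/2\}$. For each $i\in[n]$ define $$B_i=\frac{\log_2^\dagger(2v_i/v_1)}{k+1}+\sum_{j=1}^k\frac{\log_2^\dagger(v_i/v_j)}{j(j+1)}.$$ Then $\sum_{i=1}^nB_i\le1$.
   Context: $\log_2^\dagger(\alpha)=\max(0,\min(1,\log_2\alpha))$ for $\alpha\ge 0$, with $\log_2 0=-\infty$ (so $\log_2^\dagger(0)=0$). *)

theory Defs
  imports Complex_Main
begin

text \<open>Truncated binary logarithm: max(0, min(1, log2 a)) for a \<ge> 0, with log2 0 = -infinity,
  so the value at 0 is 0.\<close>
definition log2dag :: "real \<Rightarrow> real" where
  "log2dag a = (if a \<le> 0 then 0 else max 0 (min 1 (log 2 a)))"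

end

theory Submission
  imports Defs
begin

lemma ld_small: "x \<le> 1 \<Longrightarrow> log2dag x = 0"
  unfolding log2dag_def by auto

lemma ld_mid: "0 < x \<Longrightarrow> x \<le> 2 \<Longrightarrow> log2dag x = max 0 (log 2 x)"
proof -
  assume h: "0 < x" "x \<le> 2"
  have "log 2 x \<le> log 2 2" using h by simp
  then have "log 2 x \<le> 1" by simp
  then show ?thesis using h unfolding log2dag_def by auto
qed

lemma inner_max:
  fixes a :: "nat \<Rightarrow> real"
  assumes mono: "\<And>i j. 1 \<le> i \<Longrightarrow> i \<le> j \<Longrightarrow> j \<le> k \<Longrightarrow> a j \<le> a i"
    and j: "1 \<le> j" "j \<le> k"
  shows "(\<Sum>i=1..k. max 0 (a i - a j)) = (\<Sum>i=1..j. a i - a j)"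
proof -
  have split: "{1..k} = {1..j} \<union> {Suc j..k}" using j by auto
  have "(\<Sum>i=1..k. max 0 (a i - a j)) = (\<Sum>i=1..j. max 0 (a i - a j)) + (\<Sum>i=Suc j..k. max 0 (a i - a j))"
    unfolding split by (rule sum.union_disjoint) auto
  also have "(\<Sum>i=Suc j..k. max 0 (a i - a j)) = 0"
    by (rule sum.neutral) (use mono j in auto)
  also have "(\<Sum>i=1..j. max 0 (a i - a j)) = (\<Sum>i=1..j. a i - a j)"
    by (rule sum.cong) (use mono j in auto)
  finally show ?thesis by simp
qed

lemma key_ind:
  fixes a :: "nat \<Rightarrow> real"
  assumes top: "\<And>i. 1 \<le> i \<Longrightarrow> i \<le> m \<Longrightarrow> a i \<le> a 1"
    and km: "k \<le> m"
  shows "(\<Sum>j=1..k. (\<Sum>i=1..j. a i - a j) / (real j * real (j+1)))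
          \<le> (\<Sum>i=1..k. a 1 - a i) / real (k+1)"
  using km
proof (induction k)
  case 0
  then show ?case by simp
next
  case (Suc k)
  define P where "P = (\<Sum>i=1..k. a i)"
  define S where "S = (\<Sum>j=1..k. (\<Sum>i=1..j. a i - a j) / (real j * real (j+1)))"
  have T: "(\<Sum>i=1..k. a 1 - a i) = real k * a 1 - P"
    unfolding P_def by (simp add: sum_subtractf)
  have IH: "S * (real k + 1) \<le> real k * a 1 - P"
    using Suc.IH Suc.prems unfolding S_def T by (simp add: field_simps)
  have L: "(\<Sum>j=1..Suc k. (\<Sum>i=1..j. a i - a j) / (real j * real (j+1)))
     = S + (P + a (Suc k) - (real k + 1) * a (Suc k)) / ((real k + 1) * (real k + 2))"
    unfolding S_def P_def by (simp add: sum_subtractf add.commute)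
  have R: "(\<Sum>i=1..Suc k. a 1 - a i) / real (Suc k + 1) = ((real k + 1) * a 1 - P - a (Suc k)) / (real k + 2)"
    unfolding P_def by (simp add: sum_subtractf algebra_simps)
  have tk: "a (Suc k) \<le> a 1" using top Suc.prems by simp
  have "S + (P + a (Suc k) - (real k + 1) * a (Suc k)) / ((real k + 1) * (real k + 2))
        \<le> ((real k + 1) * a 1 - P - a (Suc k)) / (real k + 2)"
  proof -
    have pos: "(real k + 1) * (real k + 2) > 0" by simp
    have "S * ((real k + 1) * (real k + 2)) + (P + a (Suc k) - (real k + 1) * a (Suc k))
          \<le> ((real k + 1) * a 1 - P - a (Suc k)) * (real k + 1)"
    proof -
      have "S * ((real k + 1) * (real k + 2)) = (S * (real k + 1)) * (real k + 2)" by simp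
      also have "\<dots> \<le> (real k * a 1 - P) * (real k + 2)"
        using IH by (intro mult_right_mono) auto
      finally have A: "S * ((real k + 1) * (real k + 2)) \<le> (real k * a 1 - P) * (real k + 2)" .
      have "(real k * a 1 - P) * (real k + 2) + (P + a (Suc k) - (real k + 1) * a (Suc k))
          \<le> ((real k + 1) * a 1 - P - a (Suc k)) * (real k + 1)"
        using tk by (simp add: algebra_simps)
      with A show ?thesis by linarith
    qed
    then have "(S * ((real k + 1) * (real k + 2)) + (P + a (Suc k) - (real k + 1) * a (Suc k))) / ((real k + 1) * (real k + 2))
          \<le> (((real k + 1) * a 1 - P - a (Suc k)) * (real k + 1)) / ((real k + 1) * (real k + 2))"
      using pos by (intro divide_right_mono) auto
    moreover have "S + (P + a (Suc k) - (real k + 1) * a (Suc k)) / ((real k + 1) * (real k + 2))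
       = (S * ((real k + 1) * (real k + 2)) + (P + a (Suc k) - (real k + 1) * a (Suc k))) / ((real k + 1) * (real k + 2))"
      using pos by (simp add: add_divide_distrib)
    moreover have "((real k + 1) * a 1 - P - a (Suc k)) / (real k + 2)
       = (((real k + 1) * a 1 - P - a (Suc k)) * (real k + 1)) / ((real k + 1) * (real k + 2))"
      by simp
    ultimately show ?thesis by simp
  qed
  then show ?case using L R by simp
qed

theorem mainTheorem12:
  fixes v :: "nat \<Rightarrow> real" and n :: nat
  assumes "n \<ge> 1"
    and "\<And>i. 1 \<le> i \<Longrightarrow> i < n \<Longrightarrow> v i \<ge> v (Suc i)"
    and "v n \<ge> 0"
    and "v 1 > 0"
  shows "let k = Max {i \<in> {1..n}. v i > v 1 / 2};
             B = (\<lambda>i. log2dag (2 * v i / v 1) / real (k + 1)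
                   + (\<Sum>j = 1..k. log2dag (v i / v j) / (real j * real (j + 1))))
         in (\<Sum>i = 1..n. B i) \<le> 1"
proof -
  define K where "K = {i \<in> {1..n}. v i > v 1 / 2}"
  define k where "k = Max K"
  define a where "a = (\<lambda>i. log 2 (v i))"
  have anti: "v j \<le> v i" if "1 \<le> i" "i \<le> j" "j \<le> n" for i j
    using that(2,3)
  proof (induction j rule: dec_induct)
    case base then show ?case by simp
  next
    case (step m)
    then show ?case using assms(2)[of m] that(1) by simp
  qed
  have nonneg: "v i \<ge> 0" if "1 \<le> i" "i \<le> n" for i
    using anti[OF that(1) that(2) order_refl] assms(3) by simp
  have finK: "finite K" unfolding K_def by simp
  have oneK: "1 \<in> K" unfolding K_def using assms(1,4) by auto
  have kK: "k \<in> K" unfolding k_def using finK oneK Max_in by blast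
  have k1: "1 \<le> k" unfolding k_def using finK oneK by (simp add: Max_ge_iff)
  have kn: "k \<le> n" using kK unfolding K_def by simp
  have vk: "v k > v 1 / 2" using kK unfolding K_def by simp
  have big: "v i > v 1 / 2" if "1 \<le> i" "i \<le> k" for i
    using anti[OF that(1) that(2)] kn vk by simp
  have small: "v i \<le> v 1 / 2" if "k < i" "i \<le> n" for i
  proof (rule ccontr)
    assume "\<not> v i \<le> v 1 / 2"
    then have "i \<in> K" unfolding K_def using that k1 by auto
    then have "i \<le> k" unfolding k_def using finK by simp
    then show False using that by simp
  qed
  have vle1: "v i \<le> v 1" if "1 \<le> i" "i \<le> n" for i using anti that by simp
  define B where "B = (\<lambda>i. log2dag (2 * v i / v 1) / real (k + 1)
                   + (\<Sum>j = 1..k. log2dag (v i / v j) / (real j * real (j + 1))))"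
  have Bz: "B i = 0" if "k < i" "i \<le> n" for i
  proof -
    have "log2dag (2 * v i / v 1) = 0"
      using small[OF that] assms(4) by (intro ld_small) (simp add: field_simps)
    moreover have "log2dag (v i / v j) = 0" if "j \<in> {1..k}" for j
    proof -
      have "v j > v 1 / 2" using big that by auto
      then have "v i \<le> v j" using small[OF \<open>k < i\<close> \<open>i \<le> n\<close>] by simp
      then show ?thesis using \<open>v j > v 1 / 2\<close> assms(4) by (intro ld_small) simp
    qed
    ultimately show ?thesis unfolding B_def by simp
  qed
  have Bk: "B i = (1 + a i - a 1) / real (k+1)
     + (\<Sum>j = 1..k. max 0 (a i - a j) / (real j * real (j + 1)))" if "1 \<le> i" "i \<le> k" for i
  proof -
    have vi: "v i > 0" using big[OF that] assms(4) by linarith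
    have "log2dag (2 * v i / v 1) = max 0 (log 2 (2 * v i / v 1))"
      using vi assms(4) vle1[of i] that kn by (intro ld_mid) (auto simp: field_simps)
    also have "log 2 (2 * v i / v 1) = 1 + a i - a 1"
      unfolding a_def using vi assms(4) by (simp add: log_divide log_mult)
    also have "max 0 (1 + a i - a 1) = 1 + a i - a 1"
    proof -
      have "log 2 (2 * v i / v 1) \<ge> 0" using big[OF that] assms(4) vi
        by (subst zero_le_log_cancel_iff) (auto simp: field_simps)
      then show ?thesis unfolding a_def using vi assms(4) by (simp add: log_divide log_mult)
    qed
    finally have 1: "log2dag (2 * v i / v 1) = 1 + a i - a 1" .
    have 2: "log2dag (v i / v j) = max 0 (a i - a j)" if "j \<in> {1..k}" for j
    proof -
      have vj: "v j > v 1 / 2" using big that by auto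
      have "v i \<le> v 1" using vle1[of i] \<open>1 \<le> i\<close> \<open>i \<le> k\<close> kn by simp
      then have "v i / v j \<le> 2" using vj assms(4) by (simp add: field_simps)
      then have "log2dag (v i / v j) = max 0 (log 2 (v i / v j))"
        using vi vj assms(4) by (intro ld_mid) auto
      then show ?thesis unfolding a_def using vi vj assms(4) by (simp add: log_divide)
    qed
    have "(\<Sum>j = 1..k. log2dag (v i / v j) / (real j * real (j + 1)))
       = (\<Sum>j = 1..k. max 0 (a i - a j) / (real j * real (j + 1)))"
      by (rule sum.cong) (simp_all add: 2)
    then show ?thesis unfolding B_def 1 by simp
  qed
  have "(\<Sum>i = 1..n. B i) = (\<Sum>i = 1..k. B i) + (\<Sum>i = Suc k..n. B i)"
  proof -
    have "{1..n} = {1..k} \<union> {Suc k..n}" using k1 kn by auto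
    then show ?thesis by (simp add: sum.union_disjoint)
  qed
  also have "(\<Sum>i = Suc k..n. B i) = 0" by (rule sum.neutral) (use Bz in auto)
  also have "(\<Sum>i = 1..k. B i) = (\<Sum>i = 1..k. (1 + a i - a 1) / real (k+1))
     + (\<Sum>i = 1..k. \<Sum>j = 1..k. max 0 (a i - a j) / (real j * real (j + 1)))"
    by (simp add: Bk sum.distrib)
  also have "(\<Sum>i = 1..k. \<Sum>j = 1..k. max 0 (a i - a j) / (real j * real (j + 1)))
      = (\<Sum>j = 1..k. (\<Sum>i = 1..k. max 0 (a i - a j)) / (real j * real (j + 1)))"
    by (subst sum.swap) (simp add: sum_divide_distrib)
  also have "\<dots> = (\<Sum>j = 1..k. (\<Sum>i = 1..j. a i - a j) / (real j * real (j + 1)))"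
  proof (rule sum.cong)
    fix j assume j: "j \<in> {1..k}"
    have m: "a jj \<le> a ii" if "1 \<le> ii" "ii \<le> jj" "jj \<le> k" for ii jj
    proof -
      have "v jj > 0" using big[of jj] that assms(4) by linarith
      moreover have "v jj \<le> v ii" using anti[of ii jj] that kn by simp
      ultimately show ?thesis unfolding a_def by simp
    qed
    show "(\<Sum>i = 1..k. max 0 (a i - a j)) / (real j * real (j + 1)) =
          (\<Sum>i = 1..j. a i - a j) / (real j * real (j + 1))"
      using inner_max[of k a j, OF m] j by simp
  qed simp
  also have "(\<Sum>i = 1..k. (1 + a i - a 1) / real (k+1)) = (real k - (\<Sum>i=1..k. a 1 - a i)) / real (k+1)"
    by (simp add: sum_divide_distrib[symmetric] sum.distrib sum_subtractf algebra_simps)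
  finally have eq: "(\<Sum>i = 1..n. B i) = (real k - (\<Sum>i=1..k. a 1 - a i)) / real (k+1)
      + (\<Sum>j = 1..k. (\<Sum>i = 1..j. a i - a j) / (real j * real (j + 1)))" by simp
  have top: "a i \<le> a 1" if "1 \<le> i" "i \<le> k" for i
  proof -
    have "v i > 0" using big[of i] that assms(4) by linarith
    moreover have "v i \<le> v 1" using vle1[of i] that kn by simp
    ultimately show ?thesis unfolding a_def by simp
  qed
  have "(\<Sum>j = 1..k. (\<Sum>i = 1..j. a i - a j) / (real j * real (j + 1))) \<le> (\<Sum>i=1..k. a 1 - a i) / real (k+1)"
    using top by (intro key_ind[of k a k]) auto
  then have "(\<Sum>i = 1..n. B i) \<le> real k / real (k+1)"
    unfolding eq by (simp add: diff_divide_distrib)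
  also have "\<dots> \<le> 1" by simp
  finally show ?thesis unfolding Let_def K_def[symmetric] k_def[symmetric] B_def[symmetric] .
qed

end
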